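(* Let $G$ be a finitely generated torsion-free nilpotent group. Then $G$ has a nontrivial abelian direct factor if and only if the image of the center $Z(G)$ in the abelianization $G/[G,G]$ contains a primitive element.
   Context: An element of a finitely generated abelian group $A$ is primitive if its image in the free abelian group $A/\mathrm{Tor}(A)$ is part of a basis of $A/\mathrm{Tor}(A)$, where $\mathrm{Tor}(A)$ is the torsion subgroup. *)

theory Defs
  imports "HOL-Algebra.Algebra"
begin

definition fin_gen_group :: "('a, 'b) monoid_scheme \<Rightarrow> bool" where
  "fin_gen_group G \<longleftrightarrow> (\<exists>S. finite S \<and> S \<subseteq> carrier G \<and> generate G S = carrier G)"

definition torsion_free :: "('a, 'b) monoid_scheme \<Rightarrow> bool" where
  "torsion_free G \<longleftrightarrow>
     (\<forall>x \<in> carrier G. \<forall>n::nat. n > 0 \<and> x [^]\<^bsub>G\<^esub> n = \<one>\<^bsub>G\<^esub> \<longrightarrow> x = \<one>\<^bsub>G\<^esub>)"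

definition commutator_subgroup :: "('a, 'b) monoid_scheme \<Rightarrow> 'a set \<Rightarrow> 'a set \<Rightarrow> 'a set" where
  "commutator_subgroup G H K =
     generate G {h \<otimes>\<^bsub>G\<^esub> k \<otimes>\<^bsub>G\<^esub> inv\<^bsub>G\<^esub> h \<otimes>\<^bsub>G\<^esub> inv\<^bsub>G\<^esub> k | h k. h \<in> H \<and> k \<in> K}"

definition lower_central :: "('a, 'b) monoid_scheme \<Rightarrow> nat \<Rightarrow> 'a set" where
  "lower_central G n = ((\<lambda>H. commutator_subgroup G H (carrier G)) ^^ n) (carrier G)"

definition nilpotent_group :: "('a, 'b) monoid_scheme \<Rightarrow> bool" where
  "nilpotent_group G \<longleftrightarrow> group G \<and> (\<exists>n. lower_central G n = {\<one>\<^bsub>G\<^esub>})"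

definition center :: "('a, 'b) monoid_scheme \<Rightarrow> 'a set" where
  "center G = {z \<in> carrier G. \<forall>g \<in> carrier G. z \<otimes>\<^bsub>G\<^esub> g = g \<otimes>\<^bsub>G\<^esub> z}"

definition abelianization :: "('a, 'b) monoid_scheme \<Rightarrow> 'a set monoid" where
  "abelianization G = G Mod (derived G (carrier G))"

definition torsion_subgroup :: "('a, 'b) monoid_scheme \<Rightarrow> 'a set" where
  "torsion_subgroup A = {x \<in> carrier A. \<exists>n::nat. n > 0 \<and> x [^]\<^bsub>A\<^esub> n = \<one>\<^bsub>A\<^esub>}"

definition abelian_basis :: "('a, 'b) monoid_scheme \<Rightarrow> 'a set \<Rightarrow> bool" where
  "abelian_basis Q B \<longleftrightarrow> B \<subseteq> carrier Q \<and> generate Q B = carrier Q \<and>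
     (\<forall>F (c :: 'a \<Rightarrow> int). finite F \<longrightarrow> F \<subseteq> B \<longrightarrow>
        finprod Q (\<lambda>b. b [^]\<^bsub>Q\<^esub> c b) F = \<one>\<^bsub>Q\<^esub> \<longrightarrow> (\<forall>b \<in> F. c b = 0))"

definition primitive_elem :: "('a, 'b) monoid_scheme \<Rightarrow> 'a \<Rightarrow> bool" where
  "primitive_elem A x \<longleftrightarrow> x \<in> carrier A \<and>
     (\<exists>B. abelian_basis (A Mod torsion_subgroup A) B \<and>
          torsion_subgroup A #>\<^bsub>A\<^esub> x \<in> B)"

definition has_nontrivial_abelian_direct_factor :: "('a, 'b) monoid_scheme \<Rightarrow> bool" where
  "has_nontrivial_abelian_direct_factor G \<longleftrightarrow>
     (\<exists>H K. H \<lhd> G \<and> K \<lhd> G \<and> H \<inter> K = {\<one>\<^bsub>G\<^esub>} \<and> H <#>\<^bsub>G\<^esub> K = carrier G \<and>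
            K \<noteq> {\<one>\<^bsub>G\<^esub>} \<and> comm_group (G\<lparr>carrier := K\<rparr>))"

end

theory Submission
  imports Defs
begin

definition lcomb :: "('a, 'b) monoid_scheme \<Rightarrow> ('i \<Rightarrow> 'a) \<Rightarrow> ('i \<Rightarrow> int) \<Rightarrow> 'i set \<Rightarrow> 'a" where
  "lcomb G g c I = finprod G (\<lambda>i. g i [^]\<^bsub>G\<^esub> c i) I"

definition spans :: "('a, 'b) monoid_scheme \<Rightarrow> ('i \<Rightarrow> 'a) \<Rightarrow> 'i set \<Rightarrow> bool" where
  "spans G g I \<longleftrightarrow> (\<forall>x\<in>carrier G. \<exists>c. x = lcomb G g c I)"

definition indep :: "('a, 'b) monoid_scheme \<Rightarrow> ('i \<Rightarrow> 'a) \<Rightarrow> 'i set \<Rightarrow> bool" where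
  "indep G g I \<longleftrightarrow> (\<forall>c. lcomb G g c I = \<one>\<^bsub>G\<^esub> \<longrightarrow> (\<forall>i\<in>I. c i = 0))"

context comm_group
begin

lemma lc_closed [simp]: "g \<in> I \<rightarrow> carrier G \<Longrightarrow> lcomb G g c I \<in> carrier G"
  unfolding lcomb_def by (auto intro!: finprod_closed)

lemma lc_add: "g \<in> I \<rightarrow> carrier G \<Longrightarrow>
   lcomb G g (\<lambda>i. c i + d i) I = lcomb G g c I \<otimes> lcomb G g d I"
proof -
  assume g: "g \<in> I \<rightarrow> carrier G"
  have "finprod G (\<lambda>i. g i [^] (c i + d i)) I = finprod G (\<lambda>i. g i [^] c i \<otimes> g i [^] d i) I"
    using g by (intro finprod_cong') (auto simp: int_pow_mult[OF funcset_mem[OF g]])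
  also have "\<dots> = finprod G (\<lambda>i. g i [^] c i) I \<otimes> finprod G (\<lambda>i. g i [^] d i) I"
    using g by (intro finprod_multf) auto
  finally show ?thesis unfolding lcomb_def .
qed

lemma lc_zero [simp]: "lcomb G g (\<lambda>i. 0) I = \<one>"
  unfolding lcomb_def by simp

lemma lc_neg: "g \<in> I \<rightarrow> carrier G \<Longrightarrow> lcomb G g (\<lambda>i. - c i) I = inv (lcomb G g c I)"
proof -
  assume g: "g \<in> I \<rightarrow> carrier G"
  have "lcomb G g (\<lambda>i. - c i) I \<otimes> lcomb G g c I = lcomb G g (\<lambda>i. - c i + c i) I"
    using lc_add[OF g, of "\<lambda>i. - c i" c] by simp
  also have "\<dots> = \<one>" by simp
  finally show ?thesis using g by (simp add: inv_equality)
qed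

lemma lc_cong: "(\<And>i. i \<in> I \<Longrightarrow> c i = d i) \<Longrightarrow> (\<And>i. i \<in> I \<Longrightarrow> g i = h i) \<Longrightarrow> h \<in> I \<rightarrow> carrier G
   \<Longrightarrow> lcomb G g c I = lcomb G h d I"
  unfolding lcomb_def by (rule finprod_cong') auto

lemma lc_insert: "finite I \<Longrightarrow> k \<notin> I \<Longrightarrow> g \<in> insert k I \<rightarrow> carrier G \<Longrightarrow>
   lcomb G g c (insert k I) = g k [^] c k \<otimes> lcomb G g c I"
  unfolding lcomb_def by (subst finprod_insert) auto

lemma lc_remove: "finite I \<Longrightarrow> k \<in> I \<Longrightarrow> g \<in> I \<rightarrow> carrier G \<Longrightarrow>
   lcomb G g c I = g k [^] c k \<otimes> lcomb G g c (I - {k})"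
  using lc_insert[of "I - {k}" k g c] by (simp add: insert_absorb)

lemma lc_ind: "finite I \<Longrightarrow> k \<in> I \<Longrightarrow> g \<in> I \<rightarrow> carrier G \<Longrightarrow>
   lcomb G g (\<lambda>i. if i = k then 1 else 0) I = g k"
proof -
  assume a: "finite I" "k \<in> I" "g \<in> I \<rightarrow> carrier G"
  have "lcomb G g (\<lambda>i. if i = k then 1 else 0) I
     = g k [^] (1::int) \<otimes> lcomb G g (\<lambda>i. if i = k then 1 else 0) (I - {k})"
    using lc_remove[OF a] by simp
  also have "lcomb G g (\<lambda>i. if i = k then 1 else 0) (I - {k}) = lcomb G g (\<lambda>i. 0) (I - {k})"
    using a by (intro lc_cong) auto
  finally show ?thesis using a by (auto simp: Pi_iff)
qed

lemma lc_extend: "finite J \<Longrightarrow> I \<subseteq> J \<Longrightarrow> g \<in> J \<rightarrow> carrier G \<Longrightarrow>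
   lcomb G g c I = lcomb G g (\<lambda>i. if i \<in> I then c i else 0) J"
  unfolding lcomb_def by (rule finprod_mono_neutral_cong_left) auto

lemma lc_in_subgroup: "subgroup H G \<Longrightarrow> g \<in> I \<rightarrow> H \<Longrightarrow> lcomb G g c I \<in> H"
proof -
  assume H: "subgroup H G" and g: "g \<in> I \<rightarrow> H"
  show ?thesis
  proof (cases "finite I")
    case False then show ?thesis using H by (simp add: lcomb_def subgroup.one_closed)
  next
    case True
    then show ?thesis using g
    proof (induction I rule: finite_induct)
      case empty then show ?case using H by (simp add: lcomb_def subgroup.one_closed)
    next
      case (insert k I)
      have gc: "g \<in> insert k I \<rightarrow> carrier G" using insert.prems H subgroup.mem_carrier by fastforce
      show ?case
        using insert H gc
        by (simp add: lc_insert subgroup.m_closed subgroup_int_pow_closed)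
    qed
  qed
qed

lemma lc_sub_one: "g \<in> I \<rightarrow> carrier G \<Longrightarrow> lcomb G g c I = lcomb G g d I \<Longrightarrow>
   lcomb G g (\<lambda>i. c i - d i) I = \<one>"
proof -
  assume g: "g \<in> I \<rightarrow> carrier G" and e: "lcomb G g c I = lcomb G g d I"
  have "lcomb G g (\<lambda>i. c i - d i) I = lcomb G g (\<lambda>i. c i + (- d i)) I" by simp
  also have "\<dots> = lcomb G g c I \<otimes> inv (lcomb G g d I)"
    using lc_add[OF g, of c "\<lambda>i. - d i"] lc_neg[OF g, of d] by simp
  finally show ?thesis using e g by simp
qed

end


context comm_group
begin

lemma lc_rep_mult:
  assumes S: "S \<subseteq> carrier G" and F: "finite F" "F \<subseteq> S" and F': "finite F'" "F' \<subseteq> S"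
  shows "\<exists>E e. finite E \<and> E \<subseteq> S \<and>
     lcomb G (\<lambda>y. y) c F \<otimes> lcomb G (\<lambda>y. y) c' F' = lcomb G (\<lambda>y. y) e E"
proof -
  let ?E = "F \<union> F'"
  have g: "(\<lambda>y. y) \<in> ?E \<rightarrow> carrier G" using S F F' by auto
  have "lcomb G (\<lambda>y. y) c F = lcomb G (\<lambda>y. y) (\<lambda>i. if i \<in> F then c i else 0) ?E"
    using F F' g by (intro lc_extend) auto
  moreover have "lcomb G (\<lambda>y. y) c' F' = lcomb G (\<lambda>y. y) (\<lambda>i. if i \<in> F' then c' i else 0) ?E"
    using F F' g by (intro lc_extend) auto
  ultimately have "lcomb G (\<lambda>y. y) c F \<otimes> lcomb G (\<lambda>y. y) c' F' =
     lcomb G (\<lambda>y. y) (\<lambda>i. (if i \<in> F then c i else 0) + (if i \<in> F' then c' i else 0)) ?E"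
    using lc_add[OF g] by simp
  then show ?thesis using F F' by blast
qed

lemma generate_rep:
  assumes S: "S \<subseteq> carrier G" and x: "x \<in> generate G S"
  shows "\<exists>F c. finite F \<and> F \<subseteq> S \<and> x = lcomb G (\<lambda>y. y) c F"
  using x
proof (induction rule: generate.induct)
  case one
  have "\<one> = lcomb G (\<lambda>y. y) (\<lambda>i. 0) {}" by simp
  then show ?case by blast
next
  case (incl h)
  have "h = lcomb G (\<lambda>y. y) (\<lambda>i. if i = h then 1 else 0) {h}"
    using incl S by (subst lc_ind) auto
  then show ?case using incl by blast
next
  case (inv h)
  have "inv h = lcomb G (\<lambda>y. y) (\<lambda>i. - (if i = h then 1 else 0)) {h}"
    using inv S by (subst lc_neg) (auto simp: lc_ind)
  then show ?case using inv by blast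
next
  case (eng h1 h2)
  then obtain F1 c1 F2 c2 where "finite F1" "F1 \<subseteq> S" "h1 = lcomb G (\<lambda>y. y) c1 F1"
    "finite F2" "F2 \<subseteq> S" "h2 = lcomb G (\<lambda>y. y) c2 F2" by blast
  then show ?case using lc_rep_mult[OF S, of F1 F2 c1 c2] by auto
qed

lemma spans_of_generate:
  assumes S: "finite S" "S \<subseteq> carrier G" and gen: "generate G S = carrier G"
  shows "spans G (\<lambda>y. y) S"
  unfolding spans_def
proof
  fix x assume "x \<in> carrier G"
  then obtain F c where F: "finite F" "F \<subseteq> S" "x = lcomb G (\<lambda>y. y) c F"
    using generate_rep[OF S(2)] gen by blast
  then have "x = lcomb G (\<lambda>y. y) (\<lambda>i. if i \<in> F then c i else 0) S"
    using S lc_extend[of S F "\<lambda>y. y" c] by auto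
  then show "\<exists>c. x = lcomb G (\<lambda>y. y) c S" by blast
qed

lemma generate_of_spans:
  assumes g: "g \<in> I \<rightarrow> carrier G" and sp: "spans G g I"
  shows "generate G (g ` I) = carrier G"
proof
  show "generate G (g ` I) \<subseteq> carrier G" using g by (intro generate_incl) auto
  show "carrier G \<subseteq> generate G (g ` I)"
  proof
    fix x assume "x \<in> carrier G"
    then obtain c where "x = lcomb G g c I" using sp unfolding spans_def by blast
    moreover have "lcomb G g c I \<in> generate G (g ` I)"
      using g by (intro lc_in_subgroup generate_is_subgroup) (auto intro: generate.incl)
    ultimately show "x \<in> generate G (g ` I)" by simp
  qed
qed

end


definition tfree :: "('a, 'b) monoid_scheme \<Rightarrow> bool" where
  "tfree G \<longleftrightarrow> (\<forall>x\<in>carrier G. \<forall>n::int. n \<noteq> 0 \<and> x [^]\<^bsub>G\<^esub> n = \<one>\<^bsub>G\<^esub> \<longrightarrow> x = \<one>\<^bsub>G\<^esub>)"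

context comm_group
begin

lemma cancel_aux: "u \<in> carrier G \<Longrightarrow> v \<in> carrier G \<Longrightarrow> w \<in> carrier G \<Longrightarrow> r \<in> carrier G \<Longrightarrow>
  u \<otimes> v \<otimes> (w \<otimes> inv v \<otimes> r) = u \<otimes> (w \<otimes> r)"
proof -
  assume a: "u \<in> carrier G" "v \<in> carrier G" "w \<in> carrier G" "r \<in> carrier G"
  have "u \<otimes> v \<otimes> (w \<otimes> inv v \<otimes> r) = (u \<otimes> (w \<otimes> r)) \<otimes> (v \<otimes> inv v)"
    using a by (simp add: m_ac)
  then show ?thesis using a by simp
qed

lemma swap_identity:
  assumes I: "finite I" "i \<in> I" "j \<in> I" "i \<noteq> j" and g: "g \<in> I \<rightarrow> carrier G"
  shows "lcomb G g d I = lcomb G (g(i := g i \<otimes> g j [^] t)) (d(j := d j - t * d i)) I"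
proof -
  let ?g = "g(i := g i \<otimes> g j [^] t)" and ?d = "d(j := d j - t * d i)"
  have gi: "g i \<in> carrier G" and gj: "g j \<in> carrier G" using g I by auto
  have g': "?g \<in> I \<rightarrow> carrier G" using g gi gj by auto
  have I2: "finite (I - {i})" "j \<in> I - {i}" using I by auto
  have gI2: "g \<in> I - {i} \<rightarrow> carrier G" "?g \<in> I - {i} \<rightarrow> carrier G" using g g' by auto
  define R where "R = lcomb G g d (I - {i} - {j})"
  have R: "R \<in> carrier G" unfolding R_def using g by (intro lc_closed) auto
  have "lcomb G g d I = g i [^] d i \<otimes> (g j [^] d j \<otimes> R)"
    unfolding R_def using lc_remove[OF I(1,2) g] lc_remove[OF I2 gI2(1)] by simp
  moreover have "lcomb G ?g ?d I = ?g i [^] ?d i \<otimes> (?g j [^] ?d j \<otimes> lcomb G ?g ?d (I - {i} - {j}))"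
    using lc_remove[OF I(1,2) g'] lc_remove[OF I2 gI2(2)] by simp
  moreover have "lcomb G ?g ?d (I - {i} - {j}) = R"
    unfolding R_def using g by (intro lc_cong) auto
  moreover have "?g i [^] ?d i \<otimes> (?g j [^] ?d j \<otimes> R) = g i [^] d i \<otimes> (g j [^] d j \<otimes> R)"
  proof -
    have "?g i [^] ?d i = g i [^] d i \<otimes> g j [^] (t * d i)"
      using I gi gj by (simp add: int_pow_distrib int_pow_pow)
    moreover have "?g j [^] ?d j = g j [^] d j \<otimes> inv (g j [^] (t * d i))"
      using I gi gj by (simp add: int_pow_diff)
    ultimately show ?thesis using gi gj R by (simp add: cancel_aux)
  qed
  ultimately show ?thesis by simp
qed

lemma abs_aux:
  fixes a b :: int
  assumes "a \<noteq> 0" "b \<noteq> 0" "\<bar>a\<bar> \<le> \<bar>b\<bar>"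
  shows "nat \<bar>b - (if (a > 0) = (b > 0) then 1 else -1) * a\<bar> < nat \<bar>b\<bar>"
  using assms by (cases "a > 0"; cases "b > 0") auto

lemma reduce:
  assumes tf: "tfree G" and fin: "finite I"
  shows "g \<in> I \<rightarrow> carrier G \<Longrightarrow> spans G g I \<Longrightarrow> lcomb G g c I = \<one> \<Longrightarrow> k \<in> I \<Longrightarrow> c k \<noteq> 0 \<Longrightarrow>
    (\<Sum>i\<in>I. nat \<bar>c i\<bar>) = N \<Longrightarrow>
    \<exists>I' g'. I' \<subseteq> I \<and> card I' < card I \<and> g' \<in> I' \<rightarrow> carrier G \<and> spans G g' I'"
proof (induction N arbitrary: g c k rule: less_induct)
  case (less N g c k)
  note g = less.prems(1) and sp = less.prems(2) and rel = less.prems(3) and k = less.prems(4,5)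
  show ?case
  proof (cases "\<exists>j\<in>I - {k}. c j \<noteq> 0")
    case False
    have gk: "g k \<in> carrier G" using g k by auto
    have "lcomb G g c I = g k [^] c k \<otimes> lcomb G g c (I - {k})"
      using lc_remove[OF fin k(1) g] .
    also have "lcomb G g c (I - {k}) = lcomb G g (\<lambda>i. 0) (I - {k})"
      using False g by (intro lc_cong) auto
    finally have "g k [^] c k = \<one>" using rel gk by simp
    then have gk1: "g k = \<one>" using tf gk k unfolding tfree_def by blast
    have "spans G g (I - {k})"
      unfolding spans_def
    proof
      fix x assume "x \<in> carrier G"
      then obtain d where "x = lcomb G g d I" using sp unfolding spans_def by blast
      also have "\<dots> = g k [^] d k \<otimes> lcomb G g d (I - {k})"
        using lc_remove[OF fin k(1) g] .
      also have "lcomb G g d (I - {k}) \<in> carrier G" using g by (intro lc_closed) auto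
      then have "g k [^] d k \<otimes> lcomb G g d (I - {k}) = lcomb G g d (I - {k})" using gk1 by simp
      finally show "\<exists>d. x = lcomb G g d (I - {k})" by blast
    qed
    moreover have "card (I - {k}) < card I" using fin k(1) by (rule card_Diff1_less)
    ultimately show ?thesis using g by (intro exI[of _ "I - {k}"] exI[of _ g]) auto
  next
    case True
    then obtain j where j: "j \<in> I" "j \<noteq> k" "c j \<noteq> 0" by blast
    have claim: "\<exists>I' g'. I' \<subseteq> I \<and> card I' < card I \<and> g' \<in> I' \<rightarrow> carrier G \<and> spans G g' I'"
      if ij: "i \<in> I" "j \<in> I" "i \<noteq> j" "c i \<noteq> 0" "c j \<noteq> 0" "\<bar>c i\<bar> \<le> \<bar>c j\<bar>" for i j
    proof -
      define t :: int where "t = (if (c i > 0) = (c j > 0) then 1 else -1)"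
      define g' where "g' = g(i := g i \<otimes> g j [^] t)"
      define c' where "c' = c(j := c j - t * c i)"
      have g': "g' \<in> I \<rightarrow> carrier G" using g ij unfolding g'_def by (auto simp: Pi_iff)
      have ident: "\<And>d. lcomb G g d I = lcomb G g' (d(j := d j - t * d i)) I"
        unfolding g'_def using swap_identity[OF fin ij(1,2,3) g] .
      have rel': "lcomb G g' c' I = \<one>" using ident[of c] rel unfolding c'_def by simp
      have sp': "spans G g' I"
        unfolding spans_def
      proof
        fix x assume "x \<in> carrier G"
        then obtain d where "x = lcomb G g d I" using sp unfolding spans_def by blast
        then show "\<exists>d. x = lcomb G g' d I" using ident by blast
      qed
      have ci': "c' i \<noteq> 0" using ij unfolding c'_def by simp
      have "(\<Sum>x\<in>I. nat \<bar>c' x\<bar>) = nat \<bar>c' j\<bar> + (\<Sum>x\<in>I - {j}. nat \<bar>c' x\<bar>)"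
        by (rule sum.remove[OF fin ij(2)])
      also have "(\<Sum>x\<in>I - {j}. nat \<bar>c' x\<bar>) = (\<Sum>x\<in>I - {j}. nat \<bar>c x\<bar>)"
        unfolding c'_def by (intro sum.cong) auto
      also have "nat \<bar>c' j\<bar> < nat \<bar>c j\<bar>"
        unfolding c'_def t_def using abs_aux[OF ij(4,5,6)] by simp
      also have "nat \<bar>c j\<bar> + (\<Sum>x\<in>I - {j}. nat \<bar>c x\<bar>) = (\<Sum>x\<in>I. nat \<bar>c x\<bar>)"
        by (rule sum.remove[OF fin ij(2), symmetric])
      finally have "(\<Sum>x\<in>I. nat \<bar>c' x\<bar>) < N" using less.prems(6) by simp
      then show ?thesis using less.IH[OF _ g' sp' rel' ij(1) ci'] by blast
    qed
    show ?thesis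
    proof (cases "\<bar>c k\<bar> \<le> \<bar>c j\<bar>")
      case True then show ?thesis using claim[of k j] j k by auto
    next
      case False then show ?thesis using claim[of j k] j k by auto
    qed
  qed
qed

lemma exists_basis:
  assumes tf: "tfree G"
  shows "finite I \<Longrightarrow> g \<in> I \<rightarrow> carrier G \<Longrightarrow> spans G g I \<Longrightarrow>
    \<exists>J h. J \<subseteq> I \<and> h \<in> J \<rightarrow> carrier G \<and> spans G h J \<and> indep G h J"
proof (induction "card I" arbitrary: I g rule: less_induct)
  case (less I g)
  show ?case
  proof (cases "indep G g I")
    case True then show ?thesis using less.prems by blast
  next
    case False
    then obtain c k where "lcomb G g c I = \<one>" "k \<in> I" "c k \<noteq> 0"
      unfolding indep_def by blast
    then obtain I' g' where I': "I' \<subseteq> I" "card I' < card I" "g' \<in> I' \<rightarrow> carrier G" "spans G g' I'"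
      using reduce[OF tf less.prems(1) less.prems(2,3)] by blast
    have "finite I'" using I'(1) less.prems(1) finite_subset by blast
    then obtain J h where "J \<subseteq> I'" "h \<in> J \<rightarrow> carrier G" "spans G h J" "indep G h J"
      using less.hyps[OF I'(2) _ I'(3,4)] by blast
    then show ?thesis using I'(1) by blast
  qed
qed

end


lemma ihom_mult: "\<psi> \<in> hom G integer_group \<Longrightarrow> x \<in> carrier G \<Longrightarrow> y \<in> carrier G \<Longrightarrow>
   \<psi> (x \<otimes>\<^bsub>G\<^esub> y) = \<psi> x + \<psi> y"
  using hom_mult[of \<psi> G integer_group x y] by simp

lemma ihom_pow: "group G \<Longrightarrow> \<psi> \<in> hom G integer_group \<Longrightarrow> x \<in> carrier G \<Longrightarrow>
   \<psi> (x [^]\<^bsub>G\<^esub> (n::int)) = n * \<psi> x"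
  using hom_int_pow[of \<psi> G integer_group x n] by simp

lemma ihom_one: "group G \<Longrightarrow> \<psi> \<in> hom G integer_group \<Longrightarrow> \<psi> \<one>\<^bsub>G\<^esub> = 0"
  using ihom_pow[of G \<psi> "\<one>\<^bsub>G\<^esub>" 0] by (simp add: group.is_monoid monoid.one_closed)

lemma ihom_inv: "group G \<Longrightarrow> \<psi> \<in> hom G integer_group \<Longrightarrow> x \<in> carrier G \<Longrightarrow>
   \<psi> (inv\<^bsub>G\<^esub> x) = - \<psi> x"
  using ihom_pow[of G \<psi> x "-1"] by (simp add: group.int_pow_neg group.int_pow_1)

lemma subgroup_comm_group:
  assumes "comm_group G" "subgroup N G"
  shows "comm_group (G\<lparr>carrier := N\<rparr>)"
proof -
  interpret comm_group G by fact
  have "group (G\<lparr>carrier := N\<rparr>)" using assms(2) by (simp add: subgroup.subgroup_is_group is_group)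
  then show ?thesis
    by (rule group.group_comm_groupI) (auto simp: m_comm subgroup.mem_carrier[OF assms(2)])
qed

context comm_group
begin

lemma lc_consistent:
  assumes N: "subgroup N G" and h: "h \<in> J \<rightarrow> N"
  shows "lcomb (G\<lparr>carrier := N\<rparr>) h d J = lcomb G h d J"
proof -
  interpret NG: comm_group "G\<lparr>carrier := N\<rparr>" using subgroup_comm_group[OF comm_group_axioms N] .
  show ?thesis
  proof (cases "finite J")
    case False then show ?thesis by (simp add: lcomb_def)
  next
    case True
    then show ?thesis using h
    proof (induction J rule: finite_induct)
      case empty then show ?case by (simp add: lcomb_def)
    next
      case (insert k J)
      have hN: "h \<in> insert k J \<rightarrow> carrier (G\<lparr>carrier := N\<rparr>)" using insert.prems by simp
      have hG: "h \<in> insert k J \<rightarrow> carrier G" using insert.prems subgroup.mem_carrier[OF N] by fastforce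
      have "lcomb (G\<lparr>carrier := N\<rparr>) h d (insert k J) =
           h k [^]\<^bsub>G\<lparr>carrier := N\<rparr>\<^esub> d k \<otimes> lcomb (G\<lparr>carrier := N\<rparr>) h d J"
        using NG.lc_insert[OF insert.hyps(1,2) hN] by simp
      also have "\<dots> = h k [^] d k \<otimes> lcomb G h d J"
        using insert int_pow_consistent[OF N, of "h k" "d k"] by auto
      also have "\<dots> = lcomb G h d (insert k J)"
        using lc_insert[OF insert.hyps(1,2) hG] by simp
      finally show ?case .
    qed
  qed
qed

lemma tfree_subgroup:
  assumes "tfree G" "subgroup N G"
  shows "tfree (G\<lparr>carrier := N\<rparr>)"
  using assms unfolding tfree_def
  by (auto simp: int_pow_consistent[symmetric] subgroup.mem_carrier)

lemma lc_hom:
  assumes H: "comm_group H" and f: "f \<in> hom G H" and g: "g \<in> I \<rightarrow> carrier G"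
  shows "f (lcomb G g d I) = lcomb H (\<lambda>i. f (g i)) d I"
proof -
  interpret H: comm_group H by fact
  show ?thesis
  proof (cases "finite I")
    case False then show ?thesis using f by (simp add: lcomb_def hom_one[OF f is_group H.is_group])
  next
    case True
    then show ?thesis using g
    proof (induction I rule: finite_induct)
      case empty then show ?case using f by (simp add: lcomb_def hom_one[OF f is_group H.is_group])
    next
      case (insert k J)
      have fg: "(\<lambda>i. f (g i)) \<in> insert k J \<rightarrow> carrier H" using insert.prems f
        by (auto simp: hom_def Pi_iff)
      have gk: "g k \<in> carrier G" using insert.prems by auto
      have "f (lcomb G g d (insert k J)) = f (g k [^] d k \<otimes> lcomb G g d J)"
        using lc_insert[OF insert.hyps(1,2) insert.prems] by simp
      also have "\<dots> = f (g k) [^]\<^bsub>H\<^esub> d k \<otimes>\<^bsub>H\<^esub> f (lcomb G g d J)"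
        using f gk insert.prems hom_int_pow[OF f gk is_group H.is_group]
        by (simp add: hom_mult)
      also have "\<dots> = lcomb H (\<lambda>i. f (g i)) d (insert k J)"
        using insert H.lc_insert[OF insert.hyps(1,2) fg] by simp
      finally show ?case .
    qed
  qed
qed

lemma basis_of_indexed:
  assumes J: "finite J" and h: "h \<in> J \<rightarrow> carrier G" and sp: "spans G h J" and ind: "indep G h J"
  shows "abelian_basis G (h ` J)"
proof -
  have inj: "inj_on h J"
  proof (rule inj_onI, rule ccontr)
    fix a b assume ab: "a \<in> J" "b \<in> J" "h a = h b" "a \<noteq> b"
    have "lcomb G h (\<lambda>i. if i = a then 1 else 0) J = lcomb G h (\<lambda>i. if i = b then 1 else 0) J"
      using lc_ind[OF J ab(1) h] lc_ind[OF J ab(2) h] ab(3) by simp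
    then have "lcomb G h (\<lambda>i. (if i = a then 1 else 0) - (if i = b then 1 else 0)) J = \<one>"
      by (rule lc_sub_one[OF h])
    then show False using ind ab unfolding indep_def by force
  qed
  have gen: "generate G (h ` J) = carrier G" by (rule generate_of_spans[OF h sp])
  have indep: "\<forall>F (c :: 'a \<Rightarrow> int). finite F \<longrightarrow> F \<subseteq> h ` J \<longrightarrow>
        finprod G (\<lambda>b. b [^] c b) F = \<one> \<longrightarrow> (\<forall>b \<in> F. c b = 0)"
  proof (intro allI impI)
    fix F and c :: "'a \<Rightarrow> int"
    assume F: "finite F" "F \<subseteq> h ` J" and e: "finprod G (\<lambda>b. b [^] c b) F = \<one>"
    define c' where "c' = (\<lambda>j. if h j \<in> F then c (h j) else 0)"
    have "lcomb G h c' J = finprod G (\<lambda>b. b [^] (if b \<in> F then c b else 0)) (h ` J)"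
      unfolding lcomb_def c'_def using h inj
      by (subst finprod_reindex) (auto simp: Pi_iff)
    also have "\<dots> = finprod G (\<lambda>b. b [^] c b) F"
      using F J h by (intro finprod_mono_neutral_cong_left[symmetric]) auto
    finally have "lcomb G h c' J = \<one>" using e by simp
    then have z: "\<forall>j\<in>J. c' j = 0" using ind unfolding indep_def by blast
    show "\<forall>b\<in>F. c b = 0"
    proof
      fix b assume "b \<in> F"
      then obtain j where "j \<in> J" "b = h j" using F by blast
      then show "c b = 0" using z \<open>b \<in> F\<close> unfolding c'_def by auto
    qed
  qed
  show ?thesis unfolding abelian_basis_def using gen indep h by auto
qed

end


context comm_group
begin

lemma lc_option:
  assumes J: "finite J" and h: "h \<in> insert None (Some ` J) \<rightarrow> carrier G"
  shows "lcomb G h d (insert None (Some ` J)) =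
         h None [^] d None \<otimes> lcomb G (\<lambda>j. h (Some j)) (\<lambda>j. d (Some j)) J"
proof -
  have "lcomb G h d (insert None (Some ` J)) = h None [^] d None \<otimes> lcomb G h d (Some ` J)"
    using J h by (intro lc_insert) auto
  moreover have "lcomb G h d (Some ` J) = lcomb G (\<lambda>j. h (Some j)) (\<lambda>j. d (Some j)) J"
    unfolding lcomb_def using h by (subst finprod_reindex) (auto simp: Pi_iff)
  ultimately show ?thesis by simp
qed

lemma extend_to_basis:
  assumes tf: "tfree G" and I: "finite I" and g: "g \<in> I \<rightarrow> carrier G" and sp: "spans G g I"
    and psi: "\<psi> \<in> hom G integer_group" and q0: "q0 \<in> carrier G" "\<psi> q0 = 1"
  shows "\<exists>B. abelian_basis G B \<and> q0 \<in> B"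
proof -
  define N where "N = {x \<in> carrier G. \<psi> x = 0}"
  have N: "subgroup N G"
    unfolding N_def
    by (rule subgroupI) (auto simp: ihom_one[OF is_group psi] ihom_inv[OF is_group psi]
        ihom_mult[OF psi])
  define NG where "NG = G\<lparr>carrier := N\<rparr>"
  interpret NG: comm_group NG unfolding NG_def using subgroup_comm_group[OF comm_group_axioms N] .
  have tfN: "tfree NG" unfolding NG_def by (rule tfree_subgroup[OF tf N])
  define r where "r = (\<lambda>x. x \<otimes> inv (q0 [^] \<psi> x))"
  have r_N: "r x \<in> N" if "x \<in> carrier G" for x
    using that q0 unfolding r_def N_def
    by (simp add: ihom_mult[OF psi] ihom_inv[OF is_group psi] ihom_pow[OF is_group psi])
  have r_hom: "r \<in> hom G G"
  proof (rule homI)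
    fix x y assume xy: "x \<in> carrier G" "y \<in> carrier G"
    have "r (x \<otimes> y) = x \<otimes> y \<otimes> inv (q0 [^] \<psi> x \<otimes> q0 [^] \<psi> y)"
      unfolding r_def using xy q0 by (simp add: ihom_mult[OF psi] int_pow_mult)
    also have "\<dots> = r x \<otimes> r y"
      unfolding r_def using xy q0 by (simp add: inv_mult m_ac)
    finally show "r (x \<otimes> y) = r x \<otimes> r y" .
  qed (simp add: r_def q0)
  have r_id: "r y = y" if "y \<in> N" for y
    using that q0 unfolding r_def N_def by simp
  have rg: "(\<lambda>i. r (g i)) \<in> I \<rightarrow> N" using g r_N by auto
  have spN: "spans NG (\<lambda>i. r (g i)) I"
    unfolding spans_def
  proof
    fix y assume "y \<in> carrier NG"
    then have y: "y \<in> N" unfolding NG_def by simp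
    then have yc: "y \<in> carrier G" using subgroup.mem_carrier[OF N] by blast
    then obtain d where "y = lcomb G g d I" using sp unfolding spans_def by blast
    then have "y = r (lcomb G g d I)" using r_id[OF y] by simp
    also have "\<dots> = lcomb G (\<lambda>i. r (g i)) d I" by (rule lc_hom[OF comm_group_axioms r_hom g])
    also have "\<dots> = lcomb NG (\<lambda>i. r (g i)) d I" unfolding NG_def using lc_consistent[OF N rg] by simp
    finally show "\<exists>d. y = lcomb NG (\<lambda>i. r (g i)) d I" by blast
  qed
  have rgc: "(\<lambda>i. r (g i)) \<in> I \<rightarrow> carrier NG" using rg unfolding NG_def by simp
  obtain J h where Jh: "J \<subseteq> I" "h \<in> J \<rightarrow> carrier NG" "spans NG h J" "indep NG h J"
    using NG.exists_basis[OF tfN I rgc spN] by blast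
  have J: "finite J" using Jh(1) I finite_subset by blast
  have hN: "h \<in> J \<rightarrow> N" using Jh(2) unfolding NG_def by simp
  have hG: "h \<in> J \<rightarrow> carrier G" using hN subgroup.mem_carrier[OF N] by blast
  have lcN: "lcomb NG h e J = lcomb G h e J" for e unfolding NG_def using lc_consistent[OF N hN] .
  define J' where "J' = insert None (Some ` J)"
  define h' where "h' = (\<lambda>u. case u of None \<Rightarrow> q0 | Some j \<Rightarrow> h j)"
  have h': "h' \<in> J' \<rightarrow> carrier G" unfolding J'_def h'_def using hG q0 by auto
  have J': "finite J'" unfolding J'_def using J by simp
  have lco: "lcomb G h' d J' = q0 [^] d None \<otimes> lcomb G h (\<lambda>j. d (Some j)) J" for d
    using lc_option[OF J h'[unfolded J'_def]] unfolding J'_def h'_def by simp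
  have sp': "spans G h' J'"
    unfolding spans_def
  proof
    fix x assume x: "x \<in> carrier G"
    then have "r x \<in> carrier NG" using r_N unfolding NG_def by simp
    then obtain e where e: "r x = lcomb NG h e J" using Jh(3) unfolding spans_def by blast
    have "x = q0 [^] \<psi> x \<otimes> r x"
      unfolding r_def using x q0 by (simp add: m_lcomm)
    also have "\<dots> = lcomb G h' (\<lambda>u. case u of None \<Rightarrow> \<psi> x | Some j \<Rightarrow> e j) J'"
      using lco e lcN by simp
    finally show "\<exists>d. x = lcomb G h' d J'" by blast
  qed
  have ind': "indep G h' J'"
    unfolding indep_def
  proof (intro allI impI)
    fix d assume d: "lcomb G h' d J' = \<one>"
    have lcin: "lcomb G h (\<lambda>j. d (Some j)) J \<in> N" by (rule lc_in_subgroup[OF N hN])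
    then have psi0: "\<psi> (lcomb G h (\<lambda>j. d (Some j)) J) = 0" unfolding N_def by simp
    have "\<psi> (lcomb G h' d J') = d None"
      using lco psi0 q0 hG
      by (simp add: ihom_mult[OF psi] ihom_pow[OF is_group psi])
    then have dN: "d None = 0" using d ihom_one[OF is_group psi] by simp
    then have "lcomb G h (\<lambda>j. d (Some j)) J = \<one>" using d lco hG by simp
    then have "lcomb NG h (\<lambda>j. d (Some j)) J = \<one>\<^bsub>NG\<^esub>" using lcN unfolding NG_def by simp
    then have "\<forall>j\<in>J. d (Some j) = 0" using Jh(4) unfolding indep_def by blast
    then show "\<forall>i\<in>J'. d i = 0" using dN unfolding J'_def by auto
  qed
  have "abelian_basis G (h' ` J')" by (rule basis_of_indexed[OF J' h' sp' ind'])
  moreover have "q0 \<in> h' ` J'" unfolding J'_def h'_def by force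
  ultimately show ?thesis by blast
qed

end


context comm_group
begin

lemma coord_hom:
  assumes B: "abelian_basis G B" and b0: "b0 \<in> B"
  shows "\<exists>\<phi> \<in> hom G integer_group. \<phi> b0 = 1"
proof -
  have BC: "B \<subseteq> carrier G" and gen: "generate G B = carrier G"
    and ind: "\<And>F (c :: 'a \<Rightarrow> int). finite F \<Longrightarrow> F \<subseteq> B \<Longrightarrow>
        finprod G (\<lambda>b. b [^] c b) F = \<one> \<Longrightarrow> (\<forall>b \<in> F. c b = 0)"
    using B unfolding abelian_basis_def by auto
  define rep where "rep = (\<lambda>x F c. finite F \<and> F \<subseteq> B \<and> b0 \<in> F \<and> x = lcomb G (\<lambda>y. y) c F)"
  have ex: "\<exists>F c. rep x F c" if x: "x \<in> carrier G" for x
  proof -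
    obtain F c where F: "finite F" "F \<subseteq> B" "x = lcomb G (\<lambda>y. y) c F"
      using generate_rep[OF BC] x gen by blast
    have "x = lcomb G (\<lambda>y. y) (\<lambda>i. if i \<in> F then c i else 0) (insert b0 F)"
      using F(3) lc_extend[of "insert b0 F" F "\<lambda>y. y" c] F BC b0 by auto
    then show ?thesis unfolding rep_def using F b0 by blast
  qed
  have uniq: "c b0 = c' b0" if r: "rep x F c" "rep x F' c'" for x F c F' c'
  proof -
    let ?E = "F \<union> F'"
    have E: "finite ?E" "?E \<subseteq> B" using r unfolding rep_def by auto
    have g: "(\<lambda>y. y) \<in> ?E \<rightarrow> carrier G" using E BC by auto
    have "lcomb G (\<lambda>y. y) c F = lcomb G (\<lambda>y. y) (\<lambda>i. if i \<in> F then c i else 0) ?E"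
      using E g by (intro lc_extend) auto
    moreover have "lcomb G (\<lambda>y. y) c' F' = lcomb G (\<lambda>y. y) (\<lambda>i. if i \<in> F' then c' i else 0) ?E"
      using E g by (intro lc_extend) auto
    ultimately have "lcomb G (\<lambda>y. y) (\<lambda>i. if i \<in> F then c i else 0) ?E =
                     lcomb G (\<lambda>y. y) (\<lambda>i. if i \<in> F' then c' i else 0) ?E"
      using r unfolding rep_def by simp
    then have "lcomb G (\<lambda>y. y) (\<lambda>i. (if i \<in> F then c i else 0) - (if i \<in> F' then c' i else 0)) ?E = \<one>"
      by (rule lc_sub_one[OF g])
    then have "finprod G (\<lambda>b. b [^] ((if b \<in> F then c b else 0) - (if b \<in> F' then c' b else 0))) ?E = \<one>"
      unfolding lcomb_def by simp
    then have all: "\<forall>b\<in>?E. (if b \<in> F then c b else 0) - (if b \<in> F' then c' b else 0) = 0"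
      by (rule ind[OF E])
    have b0F: "b0 \<in> F" "b0 \<in> F'" using r unfolding rep_def by auto
    then have "b0 \<in> ?E" by simp
    from bspec[OF all this] b0F show ?thesis by simp
  qed
  define \<phi> where "\<phi> = (\<lambda>x. SOME n. \<exists>F c. rep x F c \<and> c b0 = n)"
  have phi: "\<phi> x = c b0" if "rep x F c" for x F c
  proof -
    have "\<exists>F c. rep x F c \<and> c b0 = \<phi> x"
      unfolding \<phi>_def by (rule someI_ex) (use that in blast)
    then obtain F' c' where "rep x F' c'" "c' b0 = \<phi> x" by blast
    then show ?thesis using uniq[OF that, of F' c'] by simp
  qed
  have hom: "\<phi> \<in> hom G integer_group"
  proof (rule homI)
    fix x y assume xy: "x \<in> carrier G" "y \<in> carrier G"
    obtain F c where Fc: "rep x F c" using ex xy by blast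
    obtain F' c' where Fc': "rep y F' c'" using ex xy by blast
    let ?E = "F \<union> F'"
    have E: "finite ?E" "?E \<subseteq> B" "b0 \<in> ?E" using Fc Fc' unfolding rep_def by auto
    have g: "(\<lambda>y. y) \<in> ?E \<rightarrow> carrier G" using E BC by auto
    have "x = lcomb G (\<lambda>y. y) (\<lambda>i. if i \<in> F then c i else 0) ?E"
      using Fc E g lc_extend[of ?E F "\<lambda>y. y" c] unfolding rep_def by auto
    moreover have "y = lcomb G (\<lambda>y. y) (\<lambda>i. if i \<in> F' then c' i else 0) ?E"
      using Fc' E g lc_extend[of ?E F' "\<lambda>y. y" c'] unfolding rep_def by auto
    ultimately have "x \<otimes> y = lcomb G (\<lambda>y. y)
        (\<lambda>i. (if i \<in> F then c i else 0) + (if i \<in> F' then c' i else 0)) ?E"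
      using lc_add[OF g] by simp
    then have "rep (x \<otimes> y) ?E (\<lambda>i. (if i \<in> F then c i else 0) + (if i \<in> F' then c' i else 0))"
      unfolding rep_def using E by blast
    then have "\<phi> (x \<otimes> y) = c b0 + c' b0"
      using phi Fc Fc' unfolding rep_def by fastforce
    then show "\<phi> (x \<otimes> y) = \<phi> x \<otimes>\<^bsub>integer_group\<^esub> \<phi> y"
      using phi[OF Fc] phi[OF Fc'] by simp
  qed simp
  have "rep b0 {b0} (\<lambda>i. 1)"
    unfolding rep_def using b0 BC lc_ind[of "{b0}" b0 "\<lambda>y. y"] by (auto simp: lcomb_def)
  then have "\<phi> b0 = 1" using phi by simp
  then show ?thesis using hom by blast
qed

end


lemma (in group) center_subgroup: "subgroup (center G) G"
proof -
  show ?thesis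
  proof (rule subgroupI)
    show "center G \<subseteq> carrier G" unfolding center_def by auto
    show "center G \<noteq> {}" unfolding center_def by auto
    fix a b assume a: "a \<in> center G" and b: "b \<in> center G"
    have ac: "a \<in> carrier G" and ab: "\<And>g. g \<in> carrier G \<Longrightarrow> a \<otimes> g = g \<otimes> a"
      using a unfolding center_def by auto
    have bc: "b \<in> carrier G" and bb: "\<And>g. g \<in> carrier G \<Longrightarrow> b \<otimes> g = g \<otimes> b"
      using b unfolding center_def by auto
    have "inv a \<otimes> g = g \<otimes> inv a" if g: "g \<in> carrier G" for g
    proof -
      have "inv a \<otimes> g = inv a \<otimes> (g \<otimes> a) \<otimes> inv a" using g ac by (simp add: m_assoc)
      also have "\<dots> = inv a \<otimes> (a \<otimes> g) \<otimes> inv a" using ab[OF g] by simp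
      also have "\<dots> = g \<otimes> inv a" using g ac by (simp add: m_assoc[symmetric])
      finally show ?thesis .
    qed
    then show "inv a \<in> center G" using ac unfolding center_def by auto
    have "a \<otimes> b \<otimes> g = g \<otimes> (a \<otimes> b)" if g: "g \<in> carrier G" for g
    proof -
      have "a \<otimes> b \<otimes> g = a \<otimes> (g \<otimes> b)" using g ac bc bb[OF g] by (simp add: m_assoc)
      also have "\<dots> = g \<otimes> (a \<otimes> b)" using g ac bc ab[OF g] by (simp add: m_assoc[symmetric])
      finally show ?thesis .
    qed
    then show "a \<otimes> b \<in> center G" using ac bc unfolding center_def by auto
  qed
qed


lemma (in group) decomposition:
  assumes psi: "\<psi> \<in> hom G integer_group" and z: "z \<in> center G" and pz: "\<psi> z = 1"
  shows "has_nontrivial_abelian_direct_factor G"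
proof -
  have zc: "z \<in> carrier G" using z unfolding center_def by auto
  have Z: "subgroup (center G) G" by (rule center_subgroup)
  define H where "H = {g \<in> carrier G. \<psi> g = 0}"
  define K where "K = generate G {z}"
  have Kz: "K = {z [^] (k :: int) | k. k \<in> UNIV}" unfolding K_def by (rule generate_pow[OF zc])
  have KZ: "K \<subseteq> center G" unfolding Kz using subgroup_int_pow_closed[OF Z z] by auto
  have subH: "subgroup H G"
    unfolding H_def
    by (rule subgroupI) (auto simp: ihom_one[OF is_group psi] ihom_inv[OF is_group psi]
        ihom_mult[OF psi])
  have subK: "subgroup K G" unfolding K_def using zc by (intro generate_is_subgroup) auto
  have Hn: "H \<lhd> G"
  proof (rule normal_invI[OF subH])
    fix x h assume "x \<in> carrier G" "h \<in> H"
    then show "x \<otimes> h \<otimes> inv x \<in> H"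
      unfolding H_def by (simp add: ihom_mult[OF psi] ihom_inv[OF is_group psi])
  qed
  have Kn: "K \<lhd> G"
  proof (rule normal_invI[OF subK])
    fix x h assume x: "x \<in> carrier G" and h: "h \<in> K"
    then have hc: "h \<in> center G" "h \<in> carrier G" using KZ subgroup.mem_carrier[OF subK] by auto
    then have "x \<otimes> h \<otimes> inv x = h \<otimes> x \<otimes> inv x" using x unfolding center_def by auto
    also have "\<dots> = h" using x hc by (simp add: m_assoc)
    finally show "x \<otimes> h \<otimes> inv x \<in> K" using h by simp
  qed
  have inter: "H \<inter> K = {\<one>}"
  proof
    show "{\<one>} \<subseteq> H \<inter> K" using subgroup.one_closed[OF subH] subgroup.one_closed[OF subK] by auto
    show "H \<inter> K \<subseteq> {\<one>}"
    proof
      fix x assume "x \<in> H \<inter> K"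
      then obtain k :: int where "x = z [^] k" "\<psi> x = 0" unfolding Kz H_def by blast
      then have "k = 0" using ihom_pow[OF is_group psi zc, of k] pz by simp
      then show "x \<in> {\<one>}" using \<open>x = z [^] k\<close> by simp
    qed
  qed
  have prod: "H <#> K = carrier G"
  proof
    show "H <#> K \<subseteq> carrier G"
      using subgroup.subset[OF subH] subgroup.subset[OF subK] unfolding set_mult_def by auto
    show "carrier G \<subseteq> H <#> K"
    proof
      fix g assume g: "g \<in> carrier G"
      define k where "k = z [^] \<psi> g"
      have kK: "k \<in> K" unfolding Kz k_def by blast
      have kc: "k \<in> carrier G" unfolding k_def using zc by simp
      have hH: "g \<otimes> inv k \<in> H"
        unfolding H_def k_def using g zc pz
        by (simp add: ihom_mult[OF psi] ihom_inv[OF is_group psi] ihom_pow[OF is_group psi])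
      have "g = (g \<otimes> inv k) \<otimes> k" using g kc by (simp add: m_assoc)
      then show "g \<in> H <#> K" using hH kK unfolding set_mult_def by blast
    qed
  qed
  have Knt: "K \<noteq> {\<one>}"
  proof
    assume "K = {\<one>}"
    moreover have "z \<in> K" unfolding K_def by (rule generate.incl) simp
    ultimately have "z = \<one>" by simp
    then show False using pz ihom_one[OF is_group psi] by simp
  qed
  have Kcomm: "comm_group (G\<lparr>carrier := K\<rparr>)"
  proof -
    have "group (G\<lparr>carrier := K\<rparr>)" using subK by (simp add: subgroup.subgroup_is_group is_group)
    then show ?thesis
    proof (rule group.group_comm_groupI)
      fix x y assume "x \<in> carrier (G\<lparr>carrier := K\<rparr>)" "y \<in> carrier (G\<lparr>carrier := K\<rparr>)"
      then have "x \<in> center G" "y \<in> carrier G" using KZ subgroup.mem_carrier[OF subK] by auto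
      then show "x \<otimes>\<^bsub>G\<lparr>carrier := K\<rparr>\<^esub> y = y \<otimes>\<^bsub>G\<lparr>carrier := K\<rparr>\<^esub> x"
        unfolding center_def by auto
    qed
  qed
  show ?thesis unfolding has_nontrivial_abelian_direct_factor_def
    using Hn Kn inter prod Knt Kcomm by blast
qed


lemma (in group) tf_int: "torsion_free G \<Longrightarrow> tfree G"
  unfolding tfree_def torsion_free_def
proof (intro ballI allI impI)
  fix x and n :: int
  assume tf: "\<forall>x\<in>carrier G. \<forall>n::nat. 0 < n \<and> x [^] n = \<one> \<longrightarrow> x = \<one>"
    and x: "x \<in> carrier G" and n: "n \<noteq> 0 \<and> x [^] n = \<one>"
  show "x = \<one>"
  proof (cases "n < 0")
    case True
    have "x [^] n = x [^] (- (- n))" by simp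
    also have "\<dots> = inv (x [^] (- n))" using x by (rule int_pow_neg)
    also have "x [^] (- n) = x [^] nat (- n)" using True by (simp add: pow_nat)
    finally have "inv (x [^] nat (- n)) = \<one>" using n by simp
    then have "x [^] nat (- n) = \<one>" using x by simp
    moreover have "0 < nat (- n)" using True by simp
    ultimately show ?thesis using tf x by blast
  next
    case False
    then have "x [^] nat n = \<one>" using n by (simp add: pow_nat)
    moreover have "0 < nat n" using False n by simp
    ultimately show ?thesis using tf x by blast
  qed
qed
lemma (in group) tf_sub: "torsion_free G \<Longrightarrow> subgroup K G \<Longrightarrow> torsion_free (G\<lparr>carrier := K\<rparr>)"
  unfolding torsion_free_def
proof (intro ballI allI impI)
  fix x and n :: nat
  assume tf: "\<forall>x\<in>carrier G. \<forall>n::nat. 0 < n \<and> x [^] n = \<one> \<longrightarrow> x = \<one>"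
    and K: "subgroup K G" and x: "x \<in> carrier (G\<lparr>carrier := K\<rparr>)"
    and n: "0 < n \<and> x [^]\<^bsub>G\<lparr>carrier := K\<rparr>\<^esub> n = \<one>\<^bsub>G\<lparr>carrier := K\<rparr>\<^esub>"
  have "x [^] n = \<one>" using n nat_pow_consistent[of x n K] by simp
  moreover have "x \<in> carrier G" using x subgroup.mem_carrier[OF K] by simp
  ultimately have "x = \<one>" using tf n by blast
  then show "x = \<one>\<^bsub>G\<lparr>carrier := K\<rparr>\<^esub>" by simp
qed

lemma (in group) factor_gives_hom:
  assumes fg: "fin_gen_group G" and tf: "torsion_free G" and Hn: "H \<lhd> G" and Kn: "K \<lhd> G"
    and inter: "H \<inter> K = {\<one>}" and prod: "H <#> K = carrier G" and Knt: "K \<noteq> {\<one>}"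
    and Kc: "comm_group (G\<lparr>carrier := K\<rparr>)"
  shows "\<exists>z\<in>center G. \<exists>\<psi>\<in>hom G integer_group. \<psi> z = 1"
proof -
  have subH: "subgroup H G" and subK: "subgroup K G" using Hn Kn normal_invE(1) by auto
  have Hc: "\<And>h. h \<in> H \<Longrightarrow> h \<in> carrier G" using subgroup.mem_carrier[OF subH] .
  have Kcar: "\<And>k. k \<in> K \<Longrightarrow> k \<in> carrier G" using subgroup.mem_carrier[OF subK] .
  have comm: "h \<otimes> k = k \<otimes> h" if h: "h \<in> H" and k: "k \<in> K" for h k
  proof -
    have hc: "h \<in> carrier G" and kc: "k \<in> carrier G" using Hc Kcar h k by auto
    define c where "c = h \<otimes> k \<otimes> inv h \<otimes> inv k"
    have "h \<otimes> k \<otimes> inv h \<in> K" using normal_invE(2)[OF Kn hc k] .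
    then have cK: "c \<in> K" unfolding c_def using subgroup.m_closed[OF subK] subgroup.m_inv_closed[OF subK k] by blast
    have "k \<otimes> inv h \<otimes> inv k \<in> H" using normal_invE(2)[OF Hn kc subgroup.m_inv_closed[OF subH h]] .
    then have "h \<otimes> (k \<otimes> inv h \<otimes> inv k) \<in> H" using subgroup.m_closed[OF subH h] by blast
    then have cH: "c \<in> H" unfolding c_def using hc kc by (simp add: m_assoc)
    have c1: "c = \<one>" using cH cK inter by blast
    have "h \<otimes> k = c \<otimes> k \<otimes> h" unfolding c_def using hc kc by (simp add: m_assoc)
    then show ?thesis using c1 hc kc by simp
  qed
  have dec: "\<exists>h\<in>H. \<exists>k\<in>K. g = h \<otimes> k" if "g \<in> carrier G" for g
    using that prod unfolding set_mult_def by blast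
  have uniq: "k = k'" if "h \<in> H" "k \<in> K" "h' \<in> H" "k' \<in> K" "h \<otimes> k = h' \<otimes> k'" for h k h' k'
  proof -
    have c: "h \<in> carrier G" "k \<in> carrier G" "h' \<in> carrier G" "k' \<in> carrier G" using that Hc Kcar by auto
    have e: "inv h' \<otimes> h = k' \<otimes> inv k"
    proof -
      have "inv h' \<otimes> h = inv h' \<otimes> (h \<otimes> k) \<otimes> inv k" using c by (simp add: m_assoc)
      also have "\<dots> = inv h' \<otimes> (h' \<otimes> k') \<otimes> inv k" using that by simp
      also have "\<dots> = k' \<otimes> inv k" using c by (simp add: m_assoc[symmetric])
      finally show ?thesis .
    qed
    have "inv h' \<otimes> h \<in> H" using that subH by (simp add: subgroup.m_closed subgroup.m_inv_closed)
    moreover have "k' \<otimes> inv k \<in> K" using that subK by (simp add: subgroup.m_closed subgroup.m_inv_closed)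
    ultimately have "k' \<otimes> inv k = \<one>" using e inter by auto
    moreover have "k' = (k' \<otimes> inv k) \<otimes> k" using c by (simp add: m_assoc)
    ultimately show ?thesis using c by simp
  qed
  define pK where "pK = (\<lambda>g. THE k. k \<in> K \<and> (\<exists>h\<in>H. g = h \<otimes> k))"
  have pK_eq: "pK (h \<otimes> k) = k" if "h \<in> H" "k \<in> K" for h k
    unfolding pK_def
  proof (rule the_equality)
    show "k \<in> K \<and> (\<exists>h'\<in>H. h \<otimes> k = h' \<otimes> k)" using that by blast
    fix k' assume "k' \<in> K \<and> (\<exists>h'\<in>H. h \<otimes> k = h' \<otimes> k')"
    then obtain h' where "k' \<in> K" "h' \<in> H" "h' \<otimes> k' = h \<otimes> k" by metis
    then show "k' = k" using uniq[of h' k' h k] that by blast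
  qed
  define KG where "KG = G\<lparr>carrier := K\<rparr>"
  interpret KG: comm_group KG unfolding KG_def by (rule Kc)
  have pK_hom: "pK \<in> hom G KG"
  proof (rule homI)
    fix g assume "g \<in> carrier G"
    then obtain h k where "h \<in> H" "k \<in> K" "g = h \<otimes> k" using dec by blast
    then show "pK g \<in> carrier KG" using pK_eq unfolding KG_def by simp
  next
    fix g1 g2 assume g12: "g1 \<in> carrier G" "g2 \<in> carrier G"
    obtain h1 k1 where hk1: "h1 \<in> H" "k1 \<in> K" "g1 = h1 \<otimes> k1" using dec[OF g12(1)] by blast
    obtain h2 k2 where hk2: "h2 \<in> H" "k2 \<in> K" "g2 = h2 \<otimes> k2" using dec[OF g12(2)] by blast
    note hk = hk1 hk2
    have c: "h1 \<in> carrier G" "k1 \<in> carrier G" "h2 \<in> carrier G" "k2 \<in> carrier G" using hk Hc Kcar by auto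
    have "g1 \<otimes> g2 = h1 \<otimes> (k1 \<otimes> h2) \<otimes> k2" using hk c by (simp add: m_assoc)
    also have "\<dots> = h1 \<otimes> (h2 \<otimes> k1) \<otimes> k2" using comm[OF hk(4,2)] by simp
    also have "\<dots> = (h1 \<otimes> h2) \<otimes> (k1 \<otimes> k2)" using c by (simp add: m_assoc)
    finally have "pK (g1 \<otimes> g2) = k1 \<otimes> k2"
      using pK_eq subgroup.m_closed[OF subH hk(1,4)] subgroup.m_closed[OF subK hk(2,5)] by simp
    then show "pK (g1 \<otimes> g2) = pK g1 \<otimes>\<^bsub>KG\<^esub> pK g2" using pK_eq hk unfolding KG_def by simp
  qed
  have ghom: "group_hom G KG pK" using pK_hom KG.is_group by (simp add: group_hom_def group_hom_axioms_def is_group)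
  obtain S where S: "finite S" "S \<subseteq> carrier G" "generate G S = carrier G"
    using fg unfolding fin_gen_group_def by blast
  have pK_surj: "pK ` carrier G = K"
  proof
    show "pK ` carrier G \<subseteq> K" using pK_hom unfolding KG_def hom_def by auto
    show "K \<subseteq> pK ` carrier G"
    proof
      fix k assume k: "k \<in> K"
      then have "pK (\<one> \<otimes> k) = k" using pK_eq subgroup.one_closed[OF subH] by blast
      moreover have "\<one> \<otimes> k = k" using Kcar k by simp
      ultimately show "k \<in> pK ` carrier G" using Kcar k by force
    qed
  qed
  have genK: "generate KG (pK ` S) = carrier KG"
    using group_hom.generate_img[OF ghom S(2)] S(3) pK_surj unfolding KG_def by simp
  have pS: "finite (pK ` S)" "pK ` S \<subseteq> carrier KG" using S pK_hom unfolding hom_def by auto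
  have spK: "spans KG (\<lambda>y. y) (pK ` S)" by (rule KG.spans_of_generate[OF pS genK])
  have tfK: "tfree KG" unfolding KG_def
    using group.tf_int[OF KG.is_group[unfolded KG_def] tf_sub[OF tf subK]] .
  obtain J e where Je: "J \<subseteq> pK ` S" "e \<in> J \<rightarrow> carrier KG" "spans KG e J" "indep KG e J"
    using KG.exists_basis[OF tfK pS(1) _ spK] pS(2) by blast
  have J: "finite J" using Je(1) pS(1) finite_subset by blast
  have "J \<noteq> {}"
  proof
    assume "J = {}"
    then have "\<forall>x\<in>carrier KG. x = \<one>\<^bsub>KG\<^esub>" using Je(3) unfolding spans_def lcomb_def by simp
    then have "\<forall>x\<in>K. x = \<one>" unfolding KG_def by simp
    then show False using Knt subgroup.one_closed[OF subK] by blast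
  qed
  then obtain j0 where j0: "j0 \<in> J" by blast
  have B: "abelian_basis KG (e ` J)" by (rule KG.basis_of_indexed[OF J Je(2-4)])
  obtain \<phi> where phi: "\<phi> \<in> hom KG integer_group" "\<phi> (e j0) = 1"
    using KG.coord_hom[OF B] j0 by blast
  define z where "z = e j0"
  have zK: "z \<in> K" using Je(2) j0 unfolding z_def KG_def by auto
  have zc: "z \<in> carrier G" using Kcar zK .
  have "pK z = z" using pK_eq[OF subgroup.one_closed[OF subH] zK] zc by simp
  then have psiz: "(\<phi> \<circ> pK) z = 1" using phi unfolding z_def by simp
  have psi: "\<phi> \<circ> pK \<in> hom G integer_group" by (rule Group.hom_compose[OF pK_hom phi(1)])
  have "z \<in> center G"
    unfolding center_def
  proof (intro CollectI conjI ballI)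
    show "z \<in> carrier G" by (rule zc)
    fix g assume "g \<in> carrier G"
    then obtain h k where hk: "h \<in> H" "k \<in> K" "g = h \<otimes> k" using dec by blast
    have c: "h \<in> carrier G" "k \<in> carrier G" using hk Hc Kcar by auto
    have kz: "z \<otimes> k = k \<otimes> z" using Kc zK hk(2) unfolding comm_group_def comm_monoid_def comm_monoid_axioms_def
      by auto
    have "z \<otimes> g = (z \<otimes> h) \<otimes> k" using hk c zc by (simp add: m_assoc)
    also have "\<dots> = (h \<otimes> z) \<otimes> k" using comm[OF hk(1) zK] by simp
    also have "\<dots> = h \<otimes> (z \<otimes> k)" using c zc by (simp add: m_assoc)
    also have "\<dots> = g \<otimes> z" using kz hk c zc by (simp add: m_assoc)
    finally show "z \<otimes> g = g \<otimes> z" .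
  qed
  then show ?thesis using psi psiz by blast
qed


lemma (in group) int_pow_one_nat:
  assumes x: "x \<in> carrier G" and k: "(k::int) \<noteq> 0" and e: "x [^] k = \<one>"
  shows "\<exists>m::nat. 0 < m \<and> x [^] m = \<one>"
proof (cases "k < 0")
  case True
  have "x [^] k = x [^] (- (- k))" by simp
  also have "\<dots> = inv (x [^] (- k))" using x by (rule int_pow_neg)
  also have "x [^] (- k) = x [^] nat (- k)" using True by (simp add: pow_nat)
  finally have "inv (x [^] nat (- k)) = \<one>" using e by simp
  then have "x [^] nat (- k) = \<one>" using x by simp
  moreover have "0 < nat (- k)" using True by simp
  ultimately show ?thesis by blast
next
  case False
  then have "x [^] nat k = \<one>" using e by (simp add: pow_nat)
  moreover have "0 < nat k" using False k by simp
  ultimately show ?thesis by blast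
qed

lemma (in comm_group) torsion_sub: "subgroup (torsion_subgroup G) G"
proof (rule subgroupI)
  show "torsion_subgroup G \<subseteq> carrier G" unfolding torsion_subgroup_def by auto
  have "\<one> \<in> torsion_subgroup G" unfolding torsion_subgroup_def
    by (auto intro!: exI[of _ "1::nat"])
  then show "torsion_subgroup G \<noteq> {}" by blast
  fix a b assume a: "a \<in> torsion_subgroup G" and b: "b \<in> torsion_subgroup G"
  obtain n where n: "0 < n" "a [^] (n::nat) = \<one>" "a \<in> carrier G" using a unfolding torsion_subgroup_def by blast
  obtain m where m: "0 < m" "b [^] (m::nat) = \<one>" "b \<in> carrier G" using b unfolding torsion_subgroup_def by blast
  have "inv a [^] n = \<one>" using n by (simp add: nat_pow_inv)
  then show "inv a \<in> torsion_subgroup G" using n unfolding torsion_subgroup_def by auto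
  have e1: "(a \<otimes> b) [^] (n * m) = a [^] (n * m) \<otimes> b [^] (n * m)"
    using n m by (simp add: nat_pow_distrib)
  have "a [^] (n * m) = (a [^] n) [^] m" by (rule nat_pow_pow[OF n(3), symmetric])
  then have e2: "a [^] (n * m) = \<one>" using n by simp
  have "b [^] (n * m) = (b [^] m) [^] n" unfolding mult.commute[of n m] by (rule nat_pow_pow[OF m(3), symmetric])
  then have e3: "b [^] (n * m) = \<one>" using m by simp
  have "(a \<otimes> b) [^] (n * m) = \<one>" using e1 e2 e3 by simp
  moreover have "0 < n * m" using n m by simp
  ultimately show "a \<otimes> b \<in> torsion_subgroup G" using n m unfolding torsion_subgroup_def by blast
qed

lemma (in comm_group) tfree_mod_torsion: "tfree (G Mod torsion_subgroup G)"
  unfolding tfree_def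
proof (intro ballI allI impI)
  let ?T = "torsion_subgroup G"
  have sub: "subgroup ?T G" by (rule torsion_sub)
  have nrm: "?T \<lhd> G" using sub by (rule subgroup_imp_normal)
  fix Y and n :: int
  assume Y: "Y \<in> carrier (G Mod ?T)" and n: "n \<noteq> 0 \<and> Y [^]\<^bsub>G Mod ?T\<^esub> n = \<one>\<^bsub>G Mod ?T\<^esub>"
  obtain a where a: "a \<in> carrier G" "Y = ?T #> a" using Y by (auto simp: carrier_FactGroup)
  have "?T #> (a [^] n) = ?T" using n a normal.FactGroup_int_pow[OF nrm a(1), of n] by simp
  moreover have "a [^] n \<in> ?T #> (a [^] n)" using a sub by (intro rcos_self) auto
  ultimately have "a [^] n \<in> ?T" by simp
  then obtain m where m: "0 < m" "(a [^] n) [^] (m::nat) = \<one>" unfolding torsion_subgroup_def by blast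
  have "a [^] (n * int m) = \<one>" using m a by (simp add: int_pow_pow[symmetric] int_pow_int)
  moreover have "n * int m \<noteq> 0" using n m by simp
  ultimately obtain k where "0 < k" "a [^] (k::nat) = \<one>" using int_pow_one_nat[OF a(1)] by blast
  then have "a \<in> ?T" using a unfolding torsion_subgroup_def by blast
  then have "Y = ?T" using a subgroup.rcos_const[OF sub is_group] by simp
  then show "Y = \<one>\<^bsub>G Mod ?T\<^esub>" by simp
qed


definition tq :: "('a, 'b) monoid_scheme \<Rightarrow> 'a set set monoid" where
  "tq G = abelianization G Mod torsion_subgroup (abelianization G)"

definition pimap :: "('a, 'b) monoid_scheme \<Rightarrow> 'a \<Rightarrow> 'a set set" where
  "pimap G g = torsion_subgroup (abelianization G) #>\<^bsub>abelianization G\<^esub> (derived G (carrier G) #>\<^bsub>G\<^esub> g)"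

lemma (in group) Q_facts:
  shows "comm_group (abelianization G)" "comm_group (tq G)" "tfree (tq G)" "pimap G \<in> hom G (tq G)"
    "pimap G ` carrier G = carrier (tq G)"
proof -
  define D where "D = derived G (carrier G)"
  define A where "A = G Mod D"
  define T where "T = torsion_subgroup A"
  define Q where "Q = A Mod T"
  define \<pi> where "\<pi> = pimap G"
  have AA: "abelianization G = A" unfolding A_def D_def abelianization_def ..
  have QQ: "tq G = Q" unfolding tq_def Q_def T_def AA ..
  have \<pi>\<pi>: "\<pi> = (\<lambda>g. T #>\<^bsub>A\<^esub> (D #> g))" unfolding \<pi>_def pimap_def T_def AA D_def ..
  show "comm_group (abelianization G)" "comm_group (tq G)" "tfree (tq G)" "pimap G \<in> hom G (tq G)"
    "pimap G ` carrier G = carrier (tq G)"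
    unfolding AA QQ \<pi>_def[symmetric]
  proof -
  have nD: "D \<lhd> G" unfolding D_def by (rule derived_self_is_normal)
  show cA: "comm_group A" unfolding A_def D_def by (rule derived_quot_is_comm_group)
  interpret A: comm_group A by (rule cA)
  have subT: "subgroup T A" unfolding T_def by (rule A.torsion_sub)
  have nT: "T \<lhd> A" using subT by (rule A.subgroup_imp_normal)
  show "comm_group Q" unfolding Q_def by (rule A.abelian_FactGroup[OF subT])
  show "tfree Q" unfolding Q_def T_def by (rule A.tfree_mod_torsion)
  have "(\<lambda>a. T #>\<^bsub>A\<^esub> a) \<circ> (\<lambda>g. D #> g) \<in> hom G Q"
    unfolding Q_def A_def
    using Group.hom_compose[OF normal.r_coset_hom_Mod[OF nD] normal.r_coset_hom_Mod[OF nT[unfolded A_def]]] .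
  then show "\<pi> \<in> hom G Q" unfolding \<pi>\<pi> by (simp add: o_def)
  have "\<pi> ` carrier G = (\<lambda>a. T #>\<^bsub>A\<^esub> a) ` ((\<lambda>g. D #> g) ` carrier G)"
    unfolding \<pi>\<pi> by (simp only: image_image)
  also have "(\<lambda>g. D #> g) ` carrier G = carrier A" unfolding A_def by (rule carrier_FactGroup[symmetric])
  also have "(\<lambda>a. T #>\<^bsub>A\<^esub> a) ` carrier A = carrier Q" unfolding Q_def by (rule carrier_FactGroup[symmetric])
  finally show "\<pi> ` carrier G = carrier Q" .
  qed
qed

lemma (in group) psi_factor:
  assumes psi: "\<psi> \<in> hom G integer_group"
  shows "\<exists>\<psi>Q \<in> hom (tq G) integer_group. \<forall>g\<in>carrier G. \<psi>Q (pimap G g) = \<psi> g"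
proof -
  define D where "D = derived G (carrier G)"
  define A where "A = G Mod D"
  define T where "T = torsion_subgroup A"
  define Q where "Q = A Mod T"
  define \<pi> where "\<pi> = pimap G"
  have AA: "abelianization G = A" unfolding A_def D_def abelianization_def ..
  have QQ: "tq G = Q" unfolding tq_def Q_def T_def AA ..
  have \<pi>\<pi>: "\<pi> = (\<lambda>g. T #>\<^bsub>A\<^esub> (D #> g))" unfolding \<pi>_def pimap_def T_def AA D_def ..
  show ?thesis unfolding QQ \<pi>_def[symmetric]
  proof -
  have nD: "D \<lhd> G" unfolding D_def by (rule derived_self_is_normal)
  have subD: "subgroup D G" using nD normal_invE(1) by blast
  have kerS: "subgroup {x \<in> carrier G. \<psi> x = 0} G"
    by (rule subgroupI) (auto simp: ihom_one[OF is_group psi] ihom_inv[OF is_group psi]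
        ihom_mult[OF psi])
  have "derived_set G (carrier G) \<subseteq> {x \<in> carrier G. \<psi> x = 0}"
    by (auto simp: ihom_inv[OF is_group psi] ihom_mult[OF psi])
  then have kill: "D \<subseteq> {x \<in> carrier G. \<psi> x = 0}"
    unfolding D_def derived_def by (rule generate_subgroup_incl[OF _ kerS])
  obtain \<psi>A where psiA: "\<psi>A \<in> hom A integer_group" "\<And>x. x \<in> carrier G \<Longrightarrow> \<psi>A (D #> x) = \<psi> x"
  proof (rule FactGroup_universal[OF psi nD, folded A_def])
    fix x y assume xy: "x \<in> carrier G" "y \<in> carrier G" "D #> x = D #> y"
    have "x \<in> D #> y" using rcos_self[OF xy(1) subD] xy(3) by simp
    then have "x \<otimes> inv y \<in> D" by (rule subgroup.rcos_module_imp[OF subD is_group xy(2)])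
    then have "\<psi> (x \<otimes> inv y) = 0" using kill by blast
    then show "\<psi> x = \<psi> y" using xy by (simp add: ihom_mult[OF psi] ihom_inv[OF is_group psi])
  qed auto
  have cA: "comm_group A" unfolding A_def D_def by (rule derived_quot_is_comm_group)
  interpret A: comm_group A by (rule cA)
  have subT: "subgroup T A" unfolding T_def by (rule A.torsion_sub)
  have nT: "T \<lhd> A" using subT by (rule A.subgroup_imp_normal)
  obtain \<psi>Q where psiQ: "\<psi>Q \<in> hom Q integer_group" "\<And>a. a \<in> carrier A \<Longrightarrow> \<psi>Q (T #>\<^bsub>A\<^esub> a) = \<psi>A a"
  proof (rule FactGroup_universal[OF psiA(1) nT, folded Q_def])
    fix a b assume ab: "a \<in> carrier A" "b \<in> carrier A" "T #>\<^bsub>A\<^esub> a = T #>\<^bsub>A\<^esub> b"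
    have "a \<in> T #>\<^bsub>A\<^esub> b" using A.rcos_self[OF ab(1) subT] ab(3) by simp
    then have c: "a \<otimes>\<^bsub>A\<^esub> inv\<^bsub>A\<^esub> b \<in> T" by (rule subgroup.rcos_module_imp[OF subT A.is_group ab(2)])
    then obtain n :: nat where n: "0 < n" "(a \<otimes>\<^bsub>A\<^esub> inv\<^bsub>A\<^esub> b) [^]\<^bsub>A\<^esub> n = \<one>\<^bsub>A\<^esub>"
      unfolding T_def torsion_subgroup_def by blast
    have cc: "a \<otimes>\<^bsub>A\<^esub> inv\<^bsub>A\<^esub> b \<in> carrier A" using ab by simp
    have "int n * \<psi>A (a \<otimes>\<^bsub>A\<^esub> inv\<^bsub>A\<^esub> b) = \<psi>A ((a \<otimes>\<^bsub>A\<^esub> inv\<^bsub>A\<^esub> b) [^]\<^bsub>A\<^esub> int n)"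
      using ihom_pow[OF A.is_group psiA(1) cc] by simp
    also have "\<dots> = 0" using n ihom_one[OF A.is_group psiA(1)] by (simp add: int_pow_int)
    finally have "\<psi>A (a \<otimes>\<^bsub>A\<^esub> inv\<^bsub>A\<^esub> b) = 0" using n by simp
    then show "\<psi>A a = \<psi>A b" using ab
      by (simp add: ihom_mult[OF psiA(1)] ihom_inv[OF A.is_group psiA(1)])
  qed auto
  have "\<forall>g\<in>carrier G. \<psi>Q (\<pi> g) = \<psi> g"
  proof
    fix g assume g: "g \<in> carrier G"
    have "D #> g \<in> carrier A" unfolding A_def carrier_FactGroup using g by (rule imageI)
    from psiQ(2)[OF this] psiA(2)[OF g] show "\<psi>Q (\<pi> g) = \<psi> g" unfolding \<pi>\<pi> by (rule trans)
  qed
  then show "\<exists>\<psi>Q \<in> hom Q integer_group. \<forall>g\<in>carrier G. \<psi>Q (\<pi> g) = \<psi> g" by (intro bexI[OF _ psiQ(1)])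
  qed
qed


theorem mainTheorem7:
  fixes G :: "('a, 'b) monoid_scheme"
  assumes "group G" and "fin_gen_group G" and "torsion_free G" and "nilpotent_group G"
  shows "has_nontrivial_abelian_direct_factor G \<longleftrightarrow>
         (\<exists>z \<in> center G. primitive_elem (abelianization G)
                            (derived G (carrier G) #>\<^bsub>G\<^esub> z))"
proof
  note grp = assms(1)
  have cQ: "comm_group (tq G)" by (rule group.Q_facts(2)[OF grp])
  have tfQ: "tfree (tq G)" by (rule group.Q_facts(3)[OF grp])
  have piH: "pimap G \<in> hom G (tq G)" by (rule group.Q_facts(4)[OF grp])
  have piS: "pimap G ` carrier G = carrier (tq G)" by (rule group.Q_facts(5)[OF grp])
  have pimap_eq: "pimap G z = torsion_subgroup (abelianization G) #>\<^bsub>abelianization G\<^esub>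
      (derived G (carrier G) #>\<^bsub>G\<^esub> z)" for z
    unfolding pimap_def ..
  have tq_eq: "tq G = abelianization G Mod torsion_subgroup (abelianization G)" unfolding tq_def ..
  {
    assume "has_nontrivial_abelian_direct_factor G"
    then obtain H K where HK: "H \<lhd> G" "K \<lhd> G" "H \<inter> K = {\<one>\<^bsub>G\<^esub>}" "H <#>\<^bsub>G\<^esub> K = carrier G"
        "K \<noteq> {\<one>\<^bsub>G\<^esub>}" "comm_group (G\<lparr>carrier := K\<rparr>)"
      unfolding has_nontrivial_abelian_direct_factor_def by blast
    obtain z \<psi> where z: "z \<in> center G" and psi: "\<psi> \<in> hom G integer_group" "\<psi> z = 1"
      using group.factor_gives_hom[OF grp assms(2,3) HK] by blast
    obtain \<psi>Q where psiQ: "\<psi>Q \<in> hom (tq G) integer_group" "\<And>g. g \<in> carrier G \<Longrightarrow> \<psi>Q (pimap G g) = \<psi> g"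
      using group.psi_factor[OF grp psi(1)] by blast
    obtain S where S: "finite S" "S \<subseteq> carrier G" "generate G S = carrier G"
      using assms(2) unfolding fin_gen_group_def by blast
    have ghom: "group_hom G (tq G) (pimap G)"
      using piH grp comm_group.axioms(2)[OF cQ] by (simp add: group_hom_def group_hom_axioms_def)
    have genQ: "generate (tq G) (pimap G ` S) = carrier (tq G)"
      using group_hom.generate_img[OF ghom S(2)] S(3) piS by simp
    have pS: "finite (pimap G ` S)" "pimap G ` S \<subseteq> carrier (tq G)" using S piS by auto
    have spQ: "spans (tq G) (\<lambda>y. y) (pimap G ` S)"
      by (rule comm_group.spans_of_generate[OF cQ pS genQ])
    have zc: "z \<in> carrier G" using z unfolding center_def by blast
    have q0: "pimap G z \<in> carrier (tq G)" using piS zc by blast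
    have q1: "\<psi>Q (pimap G z) = 1" using psiQ(2)[OF zc] psi(2) by simp
    have fs: "(\<lambda>y. y) \<in> pimap G ` S \<rightarrow> carrier (tq G)" using pS by auto
    obtain B where B: "abelian_basis (tq G) B" "pimap G z \<in> B"
      using comm_group.extend_to_basis[OF cQ tfQ pS(1) fs spQ psiQ(1) q0 q1] by blast
    have "derived G (carrier G) #>\<^bsub>G\<^esub> z \<in> carrier (abelianization G)"
      unfolding abelianization_def carrier_FactGroup using zc by (rule imageI)
    then have "primitive_elem (abelianization G) (derived G (carrier G) #>\<^bsub>G\<^esub> z)"
      unfolding primitive_elem_def using B unfolding tq_eq pimap_eq by blast
    then show "\<exists>z \<in> center G. primitive_elem (abelianization G) (derived G (carrier G) #>\<^bsub>G\<^esub> z)"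
      using z by blast
  }
  {
    assume "\<exists>z \<in> center G. primitive_elem (abelianization G) (derived G (carrier G) #>\<^bsub>G\<^esub> z)"
    then obtain z where z: "z \<in> center G"
      and pr: "primitive_elem (abelianization G) (derived G (carrier G) #>\<^bsub>G\<^esub> z)" by blast
    obtain B where B: "abelian_basis (tq G) B" "pimap G z \<in> B"
      using pr unfolding primitive_elem_def tq_eq pimap_eq by blast
    obtain \<phi> where phi: "\<phi> \<in> hom (tq G) integer_group" "\<phi> (pimap G z) = 1"
      using comm_group.coord_hom[OF cQ B] by blast
    have psi: "\<phi> \<circ> pimap G \<in> hom G integer_group" by (rule Group.hom_compose[OF piH phi(1)])
    have "(\<phi> \<circ> pimap G) z = 1" using phi(2) by simp
    then show "has_nontrivial_abelian_direct_factor G"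
      by (rule group.decomposition[OF grp psi z])
  }
qed


end
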